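(* Let $n\ge 2$ and let $\dot{\mathbf x}=\mathbf f(\sigma,\mathbf x)$ be a multistable regulatory system (MSRS) as defined in the context, with $f_k(\sigma,\mathbf x)=-l(x_k)+\sigma\frac{g(x_k)}{P(x_1,\dots,x_n)+h(x_k)}$; fix $\sigma>0$. Let $\mathbf r=(q,\dots,q)\in\mathbb R_{>0}^n$ be an equilibrium (a diagonal equilibrium). Put $D_n(\mathbf x)=-\frac{P(\mathbf x)+h(x_n)}{l(x_n)}$, $$\tau=\frac{\partial f_n}{\partial x_n}(\mathbf r),\qquad \xi=\frac{\frac{\partial P}{\partial x_{n-1}}(\mathbf r)}{D_n(\mathbf r)},\qquad G_1=\tau-\xi,\qquad G_2=\tau+(n-1)\xi .$$ Then $\det\left(\lambda I-J_{\mathbf f}(\mathbf r)\right)=(\lambda-G_1)^{n-1}(\lambda-G_2)$, where $J_{\mathbf f}=\left[\frac{\partial f_i}{\partial x_j}\right]_{i,j=1}^n$ is the Jacobian matrix with respect to $\mathbf x$.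
   Context: A system of ODEs $\frac{dx_k}{dt}=f_k(\sigma,x_1,\dots,x_n)$, $k=1,\dots,n$, is called a multistable regulatory system (MSRS) if $f_k(\sigma,x_1,\dots,x_n)=-l(x_k)+\sigma\frac{g(x_k)}{P(x_1,\dots,x_n)+h(x_k)}$, where $l,g,h$ are real functions of one real variable and $P$ is a real function of $n$ real variables (all differentiable), and: (1) $\sigma$ is a positive parameter; (2) $P$ is symmetric, i.e. unchanged under interchanging any two of its arguments; (3) for every $k$ and every $(x_1,\dots,x_n)\in\mathbb R_{>0}^n$, $P(x_1,\dots,x_n)+h(x_k)>0$; (4) $l(z)\neq 0$ and for every $\sigma>0$ the function $z\mapsto \sigma\frac{g(z)}{l(z)}-h(z)$ has at most one extreme point for $z\in\mathbb R_{>0}$. For a given $\sigma$, a point $\mathbf r\in\mathbb R_{>0}^n$ is an equilibrium if $f_1(\sigma,\mathbf r)=\dots=f_n(\sigma,\mathbf r)=0$. *)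

theory Defs
  imports "HOL-Analysis.Analysis"
begin

definition partial :: "(real^'n \<Rightarrow> real) \<Rightarrow> 'n \<Rightarrow> real^'n \<Rightarrow> real" where
  "partial F j x = deriv (\<lambda>t. F (\<chi> k. if k = j then t else x $ k)) (x $ j)"

definition msrs_f :: "(real \<Rightarrow> real) \<Rightarrow> (real \<Rightarrow> real) \<Rightarrow> (real \<Rightarrow> real) \<Rightarrow>
    (real^'n \<Rightarrow> real) \<Rightarrow> real \<Rightarrow> 'n \<Rightarrow> real^'n \<Rightarrow> real" where
  "msrs_f l g h P \<sigma> k x = - l (x $ k) + \<sigma> * (g (x $ k) / (P x + h (x $ k)))"

definition msrs_jacobian :: "(real \<Rightarrow> real) \<Rightarrow> (real \<Rightarrow> real) \<Rightarrow> (real \<Rightarrow> real) \<Rightarrow>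
    (real^'n \<Rightarrow> real) \<Rightarrow> real \<Rightarrow> real^'n \<Rightarrow> real^'n^'n" where
  "msrs_jacobian l g h P \<sigma> x = (\<chi> i j. partial (msrs_f l g h P \<sigma> i) j x)"

definition positive_vec :: "real^'n \<Rightarrow> bool" where
  "positive_vec x \<longleftrightarrow> (\<forall>k. x $ k > 0)"

definition symmetric_fun :: "(real^'n \<Rightarrow> real) \<Rightarrow> bool" where
  "symmetric_fun P \<longleftrightarrow> (\<forall>x i j.
     P (\<chi> k. if k = i then x $ j else if k = j then x $ i else x $ k) = P x)"

definition extreme_point_on :: "real set \<Rightarrow> (real \<Rightarrow> real) \<Rightarrow> real \<Rightarrow> bool" where
  "extreme_point_on S \<phi> z \<longleftrightarrow> z \<in> S \<and> (\<exists>e>0.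
     (\<forall>y\<in>S. \<bar>y - z\<bar> < e \<longrightarrow> \<phi> y \<le> \<phi> z) \<or> (\<forall>y\<in>S. \<bar>y - z\<bar> < e \<longrightarrow> \<phi> z \<le> \<phi> y))"

text \<open>Multistable regulatory system (conditions (2)-(4) and differentiability;
  condition (1), \<sigma> > 0, is stated separately).\<close>
definition MSRS :: "(real \<Rightarrow> real) \<Rightarrow> (real \<Rightarrow> real) \<Rightarrow> (real \<Rightarrow> real) \<Rightarrow>
    (real^'n \<Rightarrow> real) \<Rightarrow> bool" where
  "MSRS l g h P \<longleftrightarrow>
     (\<forall>z. l differentiable at z) \<and> (\<forall>z. g differentiable at z) \<and>
     (\<forall>z. h differentiable at z) \<and> (\<forall>x. P differentiable at x) \<and>
     symmetric_fun P \<and>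
     (\<forall>k x. positive_vec x \<longrightarrow> P x + h (x $ k) > 0) \<and>
     (\<forall>z>0. l z \<noteq> 0) \<and>
     (\<forall>\<sigma>>0. \<forall>z1 z2.
        extreme_point_on {0<..} (\<lambda>z. \<sigma> * (g z / l z) - h z) z1 \<and>
        extreme_point_on {0<..} (\<lambda>z. \<sigma> * (g z / l z) - h z) z2 \<longrightarrow> z1 = z2)"

definition equilibrium :: "(real \<Rightarrow> real) \<Rightarrow> (real \<Rightarrow> real) \<Rightarrow> (real \<Rightarrow> real) \<Rightarrow>
    (real^'n \<Rightarrow> real) \<Rightarrow> real \<Rightarrow> real^'n \<Rightarrow> bool" where
  "equilibrium l g h P \<sigma> r \<longleftrightarrow> positive_vec r \<and> (\<forall>k. msrs_f l g h P \<sigma> k r = 0)"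

end

theory Submission imports Defs begin

lemma span_other_rows:
  fixes A :: "real^'n^'n"
  shows "(\<Sum>j\<in>UNIV-{p}. c j *s row j A) \<in> vec.span {row j A |j. j \<noteq> p}"
proof (rule vec.span_sum)
  fix x assume "x \<in> UNIV - {p}"
  then show "c x *s row x A \<in> vec.span {row j A |j. j \<noteq> p}"
    by (intro vec.span_scale vec.span_base) auto
qed

lemma det_R:
  fixes s :: real and p :: "'n::finite"
  shows "det (\<chi> i j. if i = p then (if j = p then 1 else s) else if i = j then 1 else 0 :: real^'n^'n) = 1"
proof -
  let ?A = "mat 1 :: real^'n^'n"
  let ?x = "\<Sum>j\<in>UNIV-{p}. s *s row j ?A"
  have eq: "(\<chi> i j. if i = p then (if j = p then 1 else s) else if i = j then 1 else 0 :: real^'n^'n)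
     = (\<chi> k. if k = p then row p ?A + ?x else row k ?A)"
  proof -
    have "?x $ j = (if j = p then 0 else s)" for j
      by (simp add: sum_component row_def mat_def if_distrib[of "\<lambda>x. s * x"] sum.delta' cong: if_cong)
    then show ?thesis by (auto simp: vec_eq_iff row_def mat_def)
  qed
  show ?thesis unfolding eq by (subst det_row_span[OF span_other_rows]) simp
qed

lemma det_T:
  fixes c b :: real and p :: "'n::finite"
  assumes "CARD('n) \<ge> 2"
  shows "det (\<chi> i j. if i = p then (if j = p then c - real CARD('n) * b else - b)
                  else if i = j then c else 0 :: real^'n^'n) = c ^ (CARD('n) - 1) * (c - real CARD('n) * b)"
proof (cases "c = 0")
  case True
  obtain i :: 'n where i: "i \<noteq> p"
  proof -
    have "card (UNIV - {p}) \<ge> 1" using assms by (simp add: card_Diff_singleton)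
    then have "UNIV - {p} \<noteq> {}" by (metis card.empty not_one_le_zero)
    then show ?thesis using that by blast
  qed
  have "row i (\<chi> i j. if i = p then (if j = p then c - real CARD('n) * b else - b)
                  else if i = j then c else 0 :: real^'n^'n) = 0"
    using i True by (simp add: row_def vec_eq_iff)
  then have "det (\<chi> i j. if i = p then (if j = p then c - real CARD('n) * b else - b)
                  else if i = j then c else 0 :: real^'n^'n) = 0" by (rule det_zero_row)
  moreover have "c ^ (CARD('n) - 1) = 0" using True assms by simp
  ultimately show ?thesis by simp
next
  case False
  let ?T = "(\<chi> i j. if i = p then (if j = p then c - real CARD('n) * b else - b)
                  else if i = j then c else 0 :: real^'n^'n)"
  define x where "x = (\<Sum>j\<in>UNIV-{p}. (b / c) *s row j ?T)"
  have xc: "x $ j = (if j = p then 0 else b)" for j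
  proof -
    have "x $ j = (\<Sum>x\<in>UNIV-{p}. if x = j then b else 0)"
      unfolding x_def sum_component using False by (intro sum.cong) (auto simp: row_def)
    also have "\<dots> = (if j = p then 0 else b)" by (simp add: sum.delta')
    finally show ?thesis .
  qed
  have eq: "(\<chi> k. if k = p then row p ?T + x else row k ?T)
      = (\<chi> i j. if i = j then (if i = p then c - real CARD('n) * b else c) else 0 :: real^'n^'n)"
    by (auto simp: vec_eq_iff row_def xc)
  have "det ?T = det (\<chi> i j. if i = j then (if i = p then c - real CARD('n) * b else c) else 0 :: real^'n^'n)"
    using det_row_span[OF span_other_rows[where A="?T" and p=p and c="\<lambda>_. b / c"]] unfolding x_def[symmetric] eq by simp
  also have "\<dots> = (\<Prod>i\<in>UNIV. if i = p then c - real CARD('n) * b else c)"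
    by (subst det_diagonal) auto
  also have "\<dots> = (c - real CARD('n) * b) * (\<Prod>i\<in>UNIV-{p}. c)"
    by (subst prod.remove[of UNIV p]) (auto intro!: prod.cong)
  also have "\<dots> = c ^ (CARD('n) - 1) * (c - real CARD('n) * b)"
    by (simp add: card_Diff_singleton)
  finally show ?thesis .
qed

lemma sum_2pt:
  fixes f :: "'n::finite \<Rightarrow> real"
  shows "(\<Sum>j\<in>UNIV. (if j = p then \<alpha> else if j = i then \<beta> else 0) * f j)
     = \<alpha> * f p + (if i = p then 0 else \<beta> * f i)"
proof -
  have "(\<Sum>j\<in>UNIV. (if j = p then \<alpha> else if j = i then \<beta> else 0) * f j)
     = (\<Sum>j\<in>UNIV. (if j = p then \<alpha> * f p else 0) + (if j = i then (if i = p then 0 else \<beta> * f i) else 0))"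
    by (rule sum.cong) auto
  also have "\<dots> = \<alpha> * f p + (if i = p then 0 else \<beta> * f i)"
    by (simp add: sum.distrib)
  finally show ?thesis .
qed

lemma sum_delta_right:
  fixes f :: "'n::finite \<Rightarrow> real"
  shows "(\<Sum>k\<in>UNIV. f k * (if k = l then 1 else 0)) = f l"
proof -
  have "(\<Sum>k\<in>UNIV. f k * (if k = l then 1 else 0)) = (\<Sum>k\<in>UNIV. if k = l then f l else 0)"
    by (rule sum.cong) auto
  then show ?thesis by simp
qed

lemma det_main:
  fixes c b :: real
  assumes "CARD('n::finite) \<ge> 2"
  shows "det (mat c - (\<chi> i j. b) :: real^'n^'n) = c ^ (CARD('n) - 1) * (c - real CARD('n) * b)"
proof -
  obtain p :: 'n where True by simp
  define U :: "real^'n^'n" where "U = transpose (\<chi> i j. if i = p then (if j = p then 1 else 1) else if i = j then 1 else 0)"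
  define V :: "real^'n^'n" where "V = transpose (\<chi> i j. if i = p then (if j = p then 1 else -1) else if i = j then 1 else 0)"
  let ?M = "mat c - (\<chi> i j. b) :: real^'n^'n"
  let ?T = "(\<chi> i j. if i = p then (if j = p then c - real CARD('n) * b else - b)
                  else if i = j then c else 0 :: real^'n^'n)"
  have dU: "det U = 1" unfolding U_def det_transpose by (rule det_R)
  have dV: "det V = 1" unfolding V_def det_transpose by (rule det_R)
  have VM: "V ** ?M = (\<chi> i k. if i = p then (if i = k then c else 0) - b
       else (if i = k then c else 0) - (if p = k then c else 0))"
  proof -
    have "(V ** ?M) $ i $ k = (if i = p then (if i = k then c else 0) - b
       else (if i = k then c else 0) - (if p = k then c else 0))" for i k
    proof -
      have "(V ** ?M) $ i $ k = (\<Sum>j\<in>UNIV. (if j = p then (if i = p then 1 else -1) else if j = i then 1 else 0) * ((if j = k then c else 0) - b))"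
        unfolding V_def matrix_matrix_mult_def transpose_def mat_def
        by (simp only: vec_lambda_beta vector_minus_component)
      also have "\<dots> = (if i = p then (if i = k then c else 0) - b
       else (if i = k then c else 0) - (if p = k then c else 0))"
        by (subst sum_2pt) auto
      finally show ?thesis .
    qed
    then show ?thesis by (simp add: vec_eq_iff)
  qed
  have "(V ** ?M ** U) $ i $ l = ?T $ i $ l" for i l
  proof -
    have "(V ** ?M ** U) $ i $ l = (\<Sum>k\<in>UNIV. (V ** ?M) $ i $ k * (if l = p then 1 else if k = l then 1 else 0))"
      unfolding matrix_matrix_mult_def[of "V ** ?M"] U_def transpose_def
      by (simp only: vec_lambda_beta) (intro sum.cong; auto)
    also have "\<dots> = ?T $ i $ l"
    proof (cases "l = p")
      case True
      then show ?thesis unfolding VM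
        by (simp add: sum_subtractf)
    next
      case False
      have "(\<Sum>k\<in>UNIV. (V ** ?M) $ i $ k * (if l = p then 1 else if k = l then 1 else 0)) = (V ** ?M) $ i $ l"
        using False sum_delta_right[of "\<lambda>k. (V ** ?M) $ i $ k" l] by simp
      then show ?thesis using False unfolding VM by simp
    qed
    finally show ?thesis .
  qed
  then have "V ** ?M ** U = ?T" by (simp add: vec_eq_iff)
  then have "det (V ** ?M ** U) = det ?T" by (rule arg_cong)
  then have "det V * det ?M * det U = det ?T" by (simp only: det_mul)
  then show ?thesis using dU dV det_T[OF assms] by simp
qed

lemma aux_cancel:
  fixes S L d :: real assumes "S \<noteq> 0"
  shows "- (L * S) * d / (S * S) = - (L * d) / S"
  using assms by (simp add: divide_simps)

theorem theorem3:
  fixes l g h :: "real \<Rightarrow> real" and P :: "real^'n \<Rightarrow> real"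
    and \<sigma> q lam :: real and nn nm :: 'n
  assumes "CARD('n) \<ge> 2"
    and "MSRS l g h P"
    and "\<sigma> > 0"
    and "nn \<noteq> nm"
    and "equilibrium l g h P \<sigma> (\<chi> k. q)"
  shows "let r = (\<chi> k. q) :: real^'n;
             \<tau> = partial (msrs_f l g h P \<sigma> nn) nn r;
             D = - (P r + h (r $ nn)) / l (r $ nn);
             \<xi> = partial P nm r / D;
             G1 = \<tau> - \<xi>;
             G2 = \<tau> + real (CARD('n) - 1) * \<xi>
         in det (mat lam - msrs_jacobian l g h P \<sigma> r)
            = (lam - G1) ^ (CARD('n) - 1) * (lam - G2)"
proof -
  define r :: "real^'n" where "r = (\<chi> k. q)"
  define v where "v = (\<lambda>j t. (\<chi> k. if k = j then t else q) :: real^'n)"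
  have rk: "r $ k = q" for k by (simp add: r_def)
  have vjj: "v j t $ j = t" for j t by (simp add: v_def)
  have vq: "v j q = r" for j by (simp add: v_def r_def vec_eq_iff)
  have msrs: "MSRS l g h P" by fact
  have eqr: "equilibrium l g h P \<sigma> r" using assms(5) by (simp add: r_def)
  have qpos: "q > 0" using eqr by (simp add: equilibrium_def positive_vec_def rk)
  have Spos: "P r + h q > 0"
    using msrs eqr unfolding MSRS_def equilibrium_def by (metis rk)
  have lq: "l q \<noteq> 0" using msrs qpos unfolding MSRS_def by blast
  have eq0: "- l q + \<sigma> * (g q / (P r + h q)) = 0"
    using eqr unfolding equilibrium_def msrs_f_def by (metis rk)
  have symP: "symmetric_fun P" using msrs unfolding MSRS_def by blast
  have sym: "P (v i t) = P (v j t)" for i j t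
  proof -
    have "(\<chi> k. if k = i then v j t $ j else if k = j then v j t $ i else v j t $ k) = v i t"
      by (auto simp: v_def vec_eq_iff)
    then show ?thesis using symP unfolding symmetric_fun_def by metis
  qed
  have partial_v: "partial F j r = deriv (\<lambda>t. F (v j t)) q" for F j
    unfolding partial_def v_def r_def by (simp only: vec_lambda_beta)
  define \<tau> where "\<tau> = partial (msrs_f l g h P \<sigma> nn) nn r"
  define d where "d = partial P nm r"
  define \<xi> where "\<xi> = d / (- (P r + h (r $ nn)) / l (r $ nn))"
  have diag: "partial (msrs_f l g h P \<sigma> i) i r = \<tau>" for i
  proof -
    have "(\<lambda>t. msrs_f l g h P \<sigma> i (v i t)) = (\<lambda>t. msrs_f l g h P \<sigma> nn (v nn t))"
      by (rule ext) (simp only: msrs_f_def sym[of i _ nn] vjj)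
    then show ?thesis unfolding \<tau>_def partial_v by simp
  qed
  have dj: "partial P j r = d" for j
    unfolding d_def partial_v using sym[of j _ nm] by simp
  have off: "partial (msrs_f l g h P \<sigma> i) j r = \<xi>" if ij: "i \<noteq> j" for i j
  proof -
    have vaff: "v j = (\<lambda>t. r + (t - q) *\<^sub>R axis j 1)"
      by (auto simp: v_def r_def vec_eq_iff axis_def)
    have "v j differentiable (at q)" unfolding vaff by (intro derivative_intros)
    moreover have "P differentiable (at (v j q))" using msrs unfolding MSRS_def by blast
    ultimately have "(P \<circ> v j) differentiable (at q)" by (rule differentiable_chain_at)
    then have "DERIV (\<lambda>t. P (v j t)) q :> deriv (\<lambda>t. P (v j t)) q"
      unfolding DERIV_deriv_iff_real_differentiable by (simp add: o_def)
    then have D1: "DERIV (\<lambda>t. P (v j t)) q :> d"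
      using dj[of j] unfolding partial_v by simp
    have fun_eq: "(\<lambda>t. msrs_f l g h P \<sigma> i (v j t)) = (\<lambda>t. - l q + \<sigma> * (g q / (P (v j t) + h q)))"
      using ij by (auto simp: msrs_f_def v_def)
    have "DERIV (\<lambda>t. - l q + \<sigma> * (g q / (P (v j t) + h q))) q :> \<sigma> * (- (g q * d) / ((P r + h q) * (P r + h q)))"
      using Spos by (auto intro!: derivative_eq_intros D1 simp: vq)
    then have "partial (msrs_f l g h P \<sigma> i) j r = \<sigma> * (- (g q * d) / ((P r + h q) * (P r + h q)))"
      unfolding partial_v fun_eq by (rule DERIV_imp_deriv)
    also have "\<dots> = \<xi>"
    proof -
      have "\<sigma> * (g q / (P r + h q)) = l q" using eq0 by simp
      then have "\<sigma> * g q = l q * (P r + h q)" using Spos by (simp add: field_simps)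
      then have e: "\<sigma> * g q = l q * (P r + h q)" by simp
      have "\<sigma> * (- (g q * d) / ((P r + h q) * (P r + h q))) = - (\<sigma> * g q) * d / ((P r + h q) * (P r + h q))"
        by simp
      also have "\<dots> = - (l q * (P r + h q)) * d / ((P r + h q) * (P r + h q))"
        by (simp only: e)
      also have "\<dots> = - (l q * d) / (P r + h q)" by (rule aux_cancel) (use Spos in simp)
      also have "\<dots> = \<xi>" unfolding \<xi>_def rk using Spos lq by (simp add: field_simps)
      finally show ?thesis .
    qed
    finally show ?thesis .
  qed
  have J: "msrs_jacobian l g h P \<sigma> r = (\<chi> i j. if i = j then \<tau> else \<xi>)"
    unfolding msrs_jacobian_def by (auto simp: vec_eq_iff diag off)
  have M: "mat lam - msrs_jacobian l g h P \<sigma> r = mat (lam - \<tau> + \<xi>) - (\<chi> i j. \<xi>)"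
    unfolding J by (auto simp: vec_eq_iff mat_def)
  have n1: "real (CARD('n) - 1) = real CARD('n) - 1" using assms(1) by simp
  show ?thesis
    unfolding Let_def r_def[symmetric] \<tau>_def[symmetric] d_def[symmetric] \<xi>_def[symmetric] M
    by (simp add: det_main[OF assms(1)] n1 algebra_simps)
qed

end
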